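(* Let $p$ be a prime and $q=p^2$. Let $1\le s\le q-1$ and let $L\subseteq\{0,1,\ldots,q-1\}$ be an interval in the modulo $q$ sense of size $s$. If $\mathcal{F}\subseteq2^{[n]}$ is a $q$-modular $L$-avoiding $L$-intersecting system, then $$|\mathcal{F}|\le\sum_{i=0}^{2s-1}\binom{n}{i}.$$
   Context: $L\subseteq\{0,\ldots,q-1\}$ is an interval in the modulo $q$ sense of size $s$ if $L$ is the set of residues in $\{0,\ldots,q-1\}$ of $a,a+1,\ldots,a+s-1$ for some integer $a$. For $L\subseteq\{0,\ldots,q-1\}$, $\mathcal{F}\subseteq2^{[n]}$ is $q$-modular $L$-intersecting if for all distinct $A,B\in\mathcal{F}$, $|A\cap B|\equiv\ell\pmod q$ for some $\ell\in L$, and $q$-modular $L$-avoiding if for every $A\in\mathcal{F}$, $|A|\not\equiv\ell\pmod q$ for all $\ell\in L$. *)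

theory Defs
  imports Main "HOL-Computational_Algebra.Primes"
begin

definition mod_interval :: "nat \<Rightarrow> nat \<Rightarrow> nat set \<Rightarrow> bool" where
  "mod_interval q s L \<longleftrightarrow> (\<exists>a::int. L = {nat ((a + int j) mod int q) | j. j < s})"

definition modular_L_intersecting :: "nat \<Rightarrow> nat set \<Rightarrow> nat set set \<Rightarrow> bool" where
  "modular_L_intersecting q L F \<longleftrightarrow>
     (\<forall>A\<in>F. \<forall>B\<in>F. A \<noteq> B \<longrightarrow> (\<exists>l\<in>L. card (A \<inter> B) mod q = l mod q))"

definition modular_L_avoiding :: "nat \<Rightarrow> nat set \<Rightarrow> nat set set \<Rightarrow> bool" where
  "modular_L_avoiding q L F \<longleftrightarrow> (\<forall>A\<in>F. \<forall>l\<in>L. \<not> card A mod q = l mod q)"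

end

theory Submission imports Defs Complex_Main "HOL-Library.Function_Algebras" begin

definition sc :: "rat \<Rightarrow> (nat set \<Rightarrow> rat) \<Rightarrow> (nat set \<Rightarrow> rat)" where
  "sc c g = (\<lambda>X. c * g X)"

interpretation fv: vector_space sc
  by unfold_locales (auto simp: sc_def fun_eq_iff algebra_simps)

definition chi :: "nat set \<Rightarrow> nat set \<Rightarrow> rat" where
  "chi S X = (if S \<subseteq> X then 1 else 0)"

definition VV :: "nat set \<Rightarrow> nat \<Rightarrow> (nat set \<Rightarrow> rat) set" where
  "VV A m = fv.span (chi ` {S. S \<subseteq> A \<and> card S \<le> m})"

lemma sum_fun_apply': "(\<Sum>i\<in>I. f i) X = (\<Sum>i\<in>I. f i X)"
  by (induction I rule: infinite_finite_induct) auto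

lemma gen_step:
  assumes "finite A" "S \<subseteq> A" "card S \<le> m"
  shows "(\<lambda>X. chi S X * (of_nat (card (A \<inter> X)) - c)) \<in> VV A (Suc m)"
proof -
  have eq: "(\<lambda>X. chi S X * (of_nat (card (A \<inter> X)) - c)) =
     (\<Sum>i\<in>A. chi (insert i S)) + sc (-c) (chi S)"
  proof
    fix X
    have "of_nat (card (A \<inter> X)) = (\<Sum>i\<in>A. (if i \<in> X then 1 else 0::rat))"
      using assms(1) by (simp add: sum.If_cases Int_commute)
    hence "chi S X * of_nat (card (A \<inter> X)) = (\<Sum>i\<in>A. chi S X * (if i \<in> X then 1 else 0))"
      by (simp add: sum_distrib_left)
    also have "\<dots> = (\<Sum>i\<in>A. chi (insert i S) X)"
      by (rule sum.cong) (auto simp: chi_def)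
    finally show "chi S X * (of_nat (card (A \<inter> X)) - c) = ((\<Sum>i\<in>A. chi (insert i S)) + sc (-c) (chi S)) X"
      by (simp add: sum_fun_apply' sc_def algebra_simps)
  qed
  have "(\<Sum>i\<in>A. chi (insert i S)) \<in> VV A (Suc m)"
    unfolding VV_def
  proof (rule fv.span_sum)
    fix i assume "i \<in> A"
    moreover have "card (insert i S) \<le> Suc m"
      using assms card_insert_le_m1 by (metis card_insert_if finite_subset le_SucI Suc_le_mono)
    ultimately show "chi (insert i S) \<in> fv.span (chi ` {S. S \<subseteq> A \<and> card S \<le> Suc m})"
      using assms by (intro fv.span_base) auto
  qed
  moreover have "sc (-c) (chi S) \<in> VV A (Suc m)"
    unfolding VV_def using assms by (intro fv.span_scale fv.span_base) auto
  ultimately show ?thesis unfolding eq VV_def by (rule fv.span_add)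
qed

lemma mult_step:
  assumes "finite A" "g \<in> VV A m"
  shows "(\<lambda>X. g X * (of_nat (card (A \<inter> X)) - c)) \<in> VV A (Suc m)"
  using assms(2) unfolding VV_def
proof (induction rule: fv.span_induct_alt)
  case base
  then show ?case by (simp add: fv.span_zero[unfolded zero_fun_def])
next
  case (step d x y)
  then obtain S where S: "x = chi S" "S \<subseteq> A" "card S \<le> m" by auto
  have eq: "(\<lambda>X. (sc d x + y) X * (of_nat (card (A \<inter> X)) - c)) =
     sc d (\<lambda>X. chi S X * (of_nat (card (A \<inter> X)) - c)) + (\<lambda>X. y X * (of_nat (card (A \<inter> X)) - c))"
    by (auto simp: fun_eq_iff sc_def S algebra_simps)
  show ?case unfolding eq
    using gen_step[OF assms(1) S(2,3), of c] step(2) unfolding VV_def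
    by (intro fv.span_add fv.span_scale) auto
qed

lemma prod_step:
  assumes "finite A" "finite J" "g \<in> VV A m"
  shows "(\<lambda>X. g X * (\<Prod>j\<in>J. (of_nat (card (A \<inter> X)) - c j))) \<in> VV A (m + card J)"
  using assms(2,3)
proof (induction J arbitrary: g m rule: finite_induct)
  case empty
  then show ?case by simp
next
  case (insert j J)
  have "(\<lambda>X. g X * (of_nat (card (A \<inter> X)) - c j)) \<in> VV A (Suc m)"
    using mult_step[OF assms(1) insert(4)] .
  from insert(3)[OF this]
  show ?case using insert(1,2) by (simp add: mult.assoc mult.left_commute)
qed


lemma prod_exact:
  fixes p :: int
  assumes "prime p" "finite J" "\<And>j. j \<in> J \<Longrightarrow> \<not> p^2 dvd x j"
  shows "\<exists>u. prod x J = p ^ card {j\<in>J. p dvd x j} * u \<and> \<not> p dvd u"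
  using assms(2,3)
proof (induction J rule: finite_induct)
  case empty
  then show ?case using assms(1) not_prime_unit by auto
next
  case (insert j J)
  then obtain u where u: "prod x J = p ^ card {j\<in>J. p dvd x j} * u" "\<not> p dvd u" by auto
  show ?case
  proof (cases "p dvd x j")
    case True
    then obtain w where w: "x j = p * w" by auto
    have "\<not> p dvd w" using insert(4)[of j] w by (auto simp: power2_eq_square)
    have "{i\<in>insert j J. p dvd x i} = insert j {i\<in>J. p dvd x i}" using True by auto
    hence c: "card {i\<in>insert j J. p dvd x i} = Suc (card {i\<in>J. p dvd x i})"
      using insert(1,2) by simp
    show ?thesis
      apply (rule exI[of _ "w*u"])
      using insert(1,2) u w c \<open>\<not> p dvd w\<close> assms(1)
      by (auto simp: prime_dvd_mult_iff algebra_simps)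
  next
    case False
    have "{i\<in>insert j J. p dvd x i} = {i\<in>J. p dvd x i}" using False by auto
    then show ?thesis
      apply (intro exI[of _ "x j * u"])
      using insert(1,2) u False assms(1)
      by (auto simp: prime_dvd_mult_iff algebra_simps)
  qed
qed

lemma prod_lower:
  fixes p :: int
  assumes "finite J" "\<And>j. j \<in> J \<Longrightarrow> p ^ g j dvd x j"
  shows "p ^ sum g J dvd prod x J"
  unfolding power_sum using assms by (intro prod_dvd_prod) auto

lemma descent:
  fixes p :: int and m :: "'a \<Rightarrow> int"
  assumes "prime p" "finite T"
    and off: "\<And>A B. A \<in> T \<Longrightarrow> B \<in> T \<Longrightarrow> A \<noteq> B \<Longrightarrow> p dvd N A B"
    and diag: "\<And>B. B \<in> T \<Longrightarrow> \<not> p dvd N B B"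
    and eq: "\<And>B. B \<in> T \<Longrightarrow> (\<Sum>A\<in>T. m A * N A B) = 0"
  shows "\<forall>A\<in>T. m A = 0"
proof -
  have p1: "p > 1" using assms(1) prime_gt_1_int by blast
  have all: "\<forall>A\<in>T. p ^ i dvd m A" for i
  proof (induction i)
    case 0 then show ?case by simp
  next
    case (Suc i)
    define m' where "m' A = m A div p ^ i" for A
    have mm: "m A = p ^ i * m' A" if "A \<in> T" for A
      using Suc that unfolding m'_def by auto
    have eq': "(\<Sum>A\<in>T. m' A * N A B) = 0" if "B \<in> T" for B
    proof -
      have "p ^ i * (\<Sum>A\<in>T. m' A * N A B) = (\<Sum>A\<in>T. m A * N A B)"
        by (simp add: sum_distrib_left mm mult.assoc)
      then show ?thesis using eq[OF that] p1 by simp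
    qed
    show ?case
    proof
      fix B assume B: "B \<in> T"
      have "(\<Sum>A\<in>T. m' A * N A B) = m' B * N B B + (\<Sum>A\<in>T-{B}. m' A * N A B)"
        using B assms(2) by (simp add: sum.remove)
      hence "m' B * N B B = - (\<Sum>A\<in>T-{B}. m' A * N A B)" using eq'[OF B] by simp
      moreover have "p dvd (\<Sum>A\<in>T-{B}. m' A * N A B)"
        by (intro dvd_sum) (use off B in auto)
      ultimately have "p dvd m' B * N B B" by simp
      hence "p dvd m' B" using diag[OF B] assms(1) by (simp add: prime_dvd_mult_iff)
      thus "p ^ Suc i dvd m B" using mm[OF B] by (simp add: mult_dvd_mono)
    qed
  qed
  show ?thesis
  proof
    fix A assume A: "A \<in> T"
    show "m A = 0"
    proof (rule ccontr)
      assume ne: "m A \<noteq> 0"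
      define k where "k = nat \<bar>m A\<bar>"
      have "p ^ k dvd m A" using all A by auto
      hence "\<bar>p ^ k\<bar> \<le> \<bar>m A\<bar>" using ne by (simp add: dvd_imp_le_int)
      hence "p ^ k \<le> \<bar>m A\<bar>" using p1 by simp
      moreover have "int k < 2 ^ k"
      proof -
        have "k < 2 ^ k" by (rule less_exp)
        hence "int k < int (2 ^ k)" by (simp only: of_nat_less_iff)
        thus ?thesis by simp
      qed
      moreover have "(2::int) ^ k \<le> p ^ k" using p1 by (intro power_mono) auto
      ultimately show False unfolding k_def by simp
    qed
  qed
qed

lemma common_denom:
  fixes c :: "'a \<Rightarrow> rat"
  assumes "finite T"
  shows "\<exists>d::int. d \<noteq> 0 \<and> (\<forall>A\<in>T. \<exists>z. of_int d * c A = of_int z)"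
  using assms
proof (induction T rule: finite_induct)
  case empty then show ?case by (intro exI[of _ 1]) auto
next
  case (insert x T)
  then obtain d where d: "d \<noteq> 0" "\<forall>A\<in>T. \<exists>z. of_int d * c A = of_int z" by auto
  obtain n e where ne: "quotient_of (c x) = (n, e)" by fastforce
  have cx: "c x = of_int n / of_int e" and e: "e > 0"
    using quotient_of_div[OF ne] quotient_of_denom_pos[OF ne] by auto
  have all: "\<forall>A\<in>insert x T. \<exists>z. of_int (d * e) * c A = of_int z"
  proof
    fix A assume "A \<in> insert x T"
    then show "\<exists>z. of_int (d * e) * c A = of_int z"
    proof
      assume "A = x"
      then show ?thesis using e by (intro exI[of _ "d * n"]) (simp add: cx)
    next
      assume "A \<in> T"
      then obtain z where "of_int d * c A = of_int z" using d by auto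
      then show ?thesis by (intro exI[of _ "e * z"]) (simp add: algebra_simps)
    qed
  qed
  moreover have "d * e \<noteq> 0" using d e by simp
  ultimately show ?case by blast
qed

lemma count_bounds:
  fixes y :: int and p s :: nat
  assumes "p > 0"
  shows "s div p \<le> card {j\<in>{0..<s}. int p dvd (y - int j)}"
    and "card {j\<in>{0..<s}. int p dvd (y - int j)} \<le> s div p + 1"
proof -
  define t where "t = nat (y mod int p)"
  have tp: "t < p" using assms unfolding t_def by (simp add: nat_less_iff)
  have iff: "int p dvd (y - int j) \<longleftrightarrow> j mod p = t" for j
  proof -
    have "int p dvd (y - int j) \<longleftrightarrow> int j mod int p = y mod int p"
      by (metis mod_eq_dvd_iff)
    also have "\<dots> \<longleftrightarrow> j mod p = t"
    proof -
      have "y mod int p = int t" unfolding t_def using assms by simp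
      moreover have "int j mod int p = int (j mod p)" by (simp add: of_nat_mod)
      ultimately show ?thesis by simp
    qed
    finally show ?thesis .
  qed
  have S: "{j\<in>{0..<s}. int p dvd (y - int j)} = {j. j < s \<and> j mod p = t}"
    using iff by auto
  have inj: "inj_on (\<lambda>i. t + p * i) X" for X using assms by (auto simp: inj_on_def)
  have sub1: "(\<lambda>i. t + p * i) ` {..<s div p} \<subseteq> {j. j < s \<and> j mod p = t}"
  proof
    fix j assume "j \<in> (\<lambda>i. t + p * i) ` {..<s div p}"
    then obtain i where i: "i < s div p" "j = t + p * i" by auto
    have "Suc i \<le> s div p" using i by simp
    hence "p * Suc i \<le> p * (s div p)" by (rule mult_le_mono2)
    also have "\<dots> \<le> s" by simp
    finally have "t + p * i < s" using tp by simp
    thus "j \<in> {j. j < s \<and> j mod p = t}" using i tp by auto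
  qed
  have sub2: "{j. j < s \<and> j mod p = t} \<subseteq> (\<lambda>i. t + p * i) ` {..<s div p + 1}"
  proof
    fix j assume j: "j \<in> {j. j < s \<and> j mod p = t}"
    have "j div p \<le> s div p" using j by (simp add: div_le_mono)
    moreover have "j = t + p * (j div p)" using j mod_mult_div_eq[of j p] by simp
    ultimately show "j \<in> (\<lambda>i. t + p * i) ` {..<s div p + 1}"
      by (intro image_eqI[of _ _ "j div p"]) auto
  qed
  have fin: "finite {j. j < s \<and> j mod p = t}" by simp
  show "s div p \<le> card {j\<in>{0..<s}. int p dvd (y - int j)}"
    unfolding S using card_mono[OF fin sub1] card_image[OF inj] by simp
  show "card {j\<in>{0..<s}. int p dvd (y - int j)} \<le> s div p + 1"
    unfolding S using card_mono[OF _ sub2] card_image[OF inj] by simp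
qed


definition Ej :: "nat \<Rightarrow> int \<Rightarrow> nat \<Rightarrow> nat set \<Rightarrow> nat set" where
  "Ej p a s A = {j\<in>{0..<s}. int p dvd (int (card A) - a - int j)}"
definition jst :: "nat \<Rightarrow> int \<Rightarrow> nat \<Rightarrow> nat set \<Rightarrow> nat" where
  "jst p a s A = (if Ej p a s A \<noteq> {} then Min (Ej p a s A) else 0)"
definition J2 :: "nat \<Rightarrow> int \<Rightarrow> nat \<Rightarrow> nat set \<Rightarrow> nat set" where
  "J2 p a s A = {0..<s} - {jst p a s A}"
definition PP :: "nat \<Rightarrow> int \<Rightarrow> nat \<Rightarrow> nat set \<Rightarrow> int \<Rightarrow> int" where
  "PP p a s A t = (\<Prod>j\<in>{0..<s}. t - a - int j) * (\<Prod>j\<in>J2 p a s A. t - a - int j)"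
definition ee :: "nat \<Rightarrow> int \<Rightarrow> nat \<Rightarrow> nat set \<Rightarrow> nat" where
  "ee p a s A = card (Ej p a s A) + card {j\<in>J2 p a s A. int p dvd (int (card A) - a - int j)}"
definition ff :: "nat \<Rightarrow> int \<Rightarrow> nat \<Rightarrow> nat set \<Rightarrow> nat set \<Rightarrow> rat" where
  "ff p a s A X = of_int (PP p a s A (int (card (A \<inter> X)))) / of_int (int p ^ ee p a s A)"

lemma jst_lt: "s \<ge> 1 \<Longrightarrow> jst p a s A < s"
proof -
  assume s: "s \<ge> 1"
  show ?thesis
  proof (cases "Ej p a s A = {}")
    case True then show ?thesis using s by (simp add: jst_def)
  next
    case False
    have "Min (Ej p a s A) \<in> Ej p a s A" using False by (intro Min_in) (auto simp: Ej_def)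
    then show ?thesis using False by (auto simp: jst_def Ej_def)
  qed
qed

lemma jst_in:
  assumes "Ej p a s A \<noteq> {}" shows "jst p a s A \<in> Ej p a s A"
proof -
  have "finite (Ej p a s A)" by (simp add: Ej_def)
  from Min_in[OF this assms] show ?thesis using assms by (simp add: jst_def)
qed

lemma card_split:
  fixes js s :: nat
  assumes "js < s"
  shows "card {j\<in>{0..<s}. P j} = card {j\<in>{0..<s} - {js}. P j} + (if P js then 1 else 0)"
proof (cases "P js")
  case True
  have "{j\<in>{0..<s}. P j} = insert js {j\<in>{0..<s} - {js}. P j}" using True assms by auto
  then show ?thesis using True by simp
next
  case False
  have "{j\<in>{0..<s}. P j} = {j\<in>{0..<s} - {js}. P j}" using False by auto
  then show ?thesis using False by simp
qed

lemma ff_span: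
  assumes "finite A" "s \<ge> 1"
  shows "ff p a s A \<in> VV A (2 * s - 1)"
proof -
  let ?c = "\<lambda>j::nat. (of_int a + of_nat j :: rat)"
  have g0: "chi {} \<in> VV A 0" unfolding VV_def by (intro fv.span_base) auto
  have g1: "(\<lambda>X. chi {} X * (\<Prod>j\<in>{0..<s}. (of_nat (card (A \<inter> X)) - ?c j))) \<in> VV A (0 + card {0..<s})"
    by (rule prod_step[OF assms(1) _ g0]) auto
  have g2: "(\<lambda>X. (chi {} X * (\<Prod>j\<in>{0..<s}. (of_nat (card (A \<inter> X)) - ?c j))) *
      (\<Prod>j\<in>J2 p a s A. (of_nat (card (A \<inter> X)) - ?c j))) \<in> VV A (0 + card {0..<s} + card (J2 p a s A))"
    by (rule prod_step[OF assms(1) _ g1]) (auto simp: J2_def)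
  have cJ: "card (J2 p a s A) = s - 1" using jst_lt[OF assms(2)] by (simp add: J2_def)
  have "0 + card {0..<s} + card (J2 p a s A) = 2 * s - 1" using cJ assms(2) by simp
  note g2 = g2[unfolded this]
  have eq: "ff p a s A = sc (inverse (of_int (int p ^ ee p a s A)))
     (\<lambda>X. (chi {} X * (\<Prod>j\<in>{0..<s}. (of_nat (card (A \<inter> X)) - ?c j))) *
      (\<Prod>j\<in>J2 p a s A. (of_nat (card (A \<inter> X)) - ?c j)))"
    by (auto simp: fun_eq_iff ff_def sc_def PP_def chi_def of_int_prod divide_inverse algebra_simps)
  show ?thesis unfolding eq VV_def using g2 unfolding VV_def by (rule fv.span_scale)
qed


lemma card_ind: "finite S \<Longrightarrow> (\<Sum>j\<in>S. if P j then 1 else 0::nat) = card {j\<in>S. P j}"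
  by (simp add: sum.If_cases Int_def conj_commute)

lemma PP_exact:
  assumes "prime p" "\<And>j. j < s \<Longrightarrow> \<not> (int p)^2 dvd (int (card A) - a - int j)"
  shows "\<exists>u. PP p a s A (int (card A)) = int p ^ ee p a s A * u \<and> \<not> int p dvd u"
proof -
  have pr: "prime (int p)" using assms(1) by simp
  obtain u1 where u1: "(\<Prod>j\<in>{0..<s}. int (card A) - a - int j) =
      int p ^ card {j\<in>{0..<s}. int p dvd (int (card A) - a - int j)} * u1" "\<not> int p dvd u1"
    using prod_exact[OF pr, of "{0..<s}" "\<lambda>j. int (card A) - a - int j"] assms(2) by auto
  obtain u2 where u2: "(\<Prod>j\<in>J2 p a s A. int (card A) - a - int j) =
      int p ^ card {j\<in>J2 p a s A. int p dvd (int (card A) - a - int j)} * u2" "\<not> int p dvd u2"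
    using prod_exact[OF pr, of "J2 p a s A" "\<lambda>j. int (card A) - a - int j"] assms(2)
    by (auto simp: J2_def)
  show ?thesis
    apply (intro exI[of _ "u1 * u2"])
    using u1 u2 pr by (auto simp: PP_def ee_def Ej_def power_add prime_dvd_mult_iff algebra_simps)
qed

lemma PP_lower:
  assumes "prime p" "s \<ge> 1" "j0 < s" "(int p)^2 dvd (k - a - int j0)"
  shows "int p ^ (ee p a s A + 1) dvd PP p a s A k"
proof -
  define g where "g j = (if int p dvd (k - a - int j) then 1 else 0) + (if j = j0 then 1 else (0::nat))" for j
  have pj0: "int p dvd (k - a - int j0)" using assms(4) by (metis dvd_mult_left power2_eq_square)
  have hd: "int p ^ g j dvd (k - a - int j)" for j
  proof (cases "j = j0")
    case True then show ?thesis using assms(4) pj0 by (simp add: g_def power2_eq_square)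
  next
    case False then show ?thesis by (auto simp: g_def)
  qed
  have l1: "int p ^ sum g {0..<s} dvd (\<Prod>j\<in>{0..<s}. k - a - int j)"
    by (rule prod_lower) (use hd in auto)
  have l2: "int p ^ sum g (J2 p a s A) dvd (\<Prod>j\<in>J2 p a s A. k - a - int j)"
    by (rule prod_lower) (use hd in \<open>auto simp: J2_def\<close>)
  have l: "int p ^ (sum g {0..<s} + sum g (J2 p a s A)) dvd PP p a s A k"
    unfolding PP_def power_add using l1 l2 by (rule mult_dvd_mono)
  define Dk where "Dk = card {j\<in>{0..<s}. int p dvd (k - a - int j)}"
  define D2k where "D2k = card {j\<in>J2 p a s A. int p dvd (k - a - int j)}"
  define Dr where "Dr = card {j\<in>{0..<s}. int p dvd (int (card A) - a - int j)}"
  define D2r where "D2r = card {j\<in>J2 p a s A. int p dvd (int (card A) - a - int j)}"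
  have fJ2: "finite (J2 p a s A)" by (simp add: J2_def)
  have sg1: "sum g {0..<s} = Dk + 1"
    unfolding g_def sum.distrib Dk_def using assms(3) by (simp add: card_ind)
  have sg2: "sum g (J2 p a s A) = D2k + (if j0 \<in> J2 p a s A then 1 else 0)"
    unfolding g_def sum.distrib D2k_def using fJ2 by (simp add: card_ind)
  have ee: "ee p a s A = Dr + D2r" by (simp add: ee_def Ej_def Dr_def D2r_def)
  have js: "jst p a s A < s" using jst_lt[OF assms(2)] .
  have cs_k: "Dk = D2k + (if int p dvd (k - a - int (jst p a s A)) then 1 else 0)"
    unfolding Dk_def D2k_def J2_def by (rule card_split[OF js])
  have cs_r: "Dr = D2r + (if int p dvd (int (card A) - a - int (jst p a s A)) then 1 else 0)"
    unfolding Dr_def D2r_def J2_def by (rule card_split[OF js])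
  have p0: "p > 0" using assms(1) prime_gt_0_nat by blast
  have bk: "s div p \<le> Dk" "Dk \<le> s div p + 1" unfolding Dk_def using count_bounds[OF p0, of s "k - a"] by auto
  have br: "s div p \<le> Dr" "Dr \<le> s div p + 1" unfolding Dr_def using count_bounds[OF p0, of s "int (card A) - a"] by auto
  have "ee p a s A + 1 \<le> sum g {0..<s} + sum g (J2 p a s A)"
  proof (cases "Ej p a s A = {}")
    case True
    hence "Dr = 0" by (simp add: Dr_def Ej_def)
    then show ?thesis using ee cs_r sg1 sg2 by simp
  next
    case False
    hence jin: "int p dvd (int (card A) - a - int (jst p a s A))"
      using jst_in[OF False] by (simp add: Ej_def)
    show ?thesis
    proof (cases "int p dvd (k - a - int (jst p a s A))")
      case True
      define \<Delta> where "\<Delta> = k - int (card A)"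
      have pd: "int p dvd \<Delta>"
      proof -
        have eq: "\<Delta> = (k - a - int (jst p a s A)) - (int (card A) - a - int (jst p a s A))"
          unfolding \<Delta>_def by simp
        show ?thesis unfolding eq by (rule dvd_diff[OF True jin])
      qed
      have iff: "int p dvd (k - a - int j) \<longleftrightarrow> int p dvd (int (card A) - a - int j)" for j
      proof -
        have eq2: "k - a - int j = \<Delta> + (int (card A) - a - int j)" unfolding \<Delta>_def by simp
        show ?thesis unfolding eq2 by (rule dvd_add_right_iff[OF pd])
      qed
      have "Dk = Dr" "D2k = D2r" unfolding Dk_def Dr_def D2k_def D2r_def using iff by simp_all
      then show ?thesis using ee cs_r cs_k sg1 sg2 True jin by simp
    next
      case False
      have "j0 \<noteq> jst p a s A" using False pj0 by auto
      hence "j0 \<in> J2 p a s A" using assms(3) by (simp add: J2_def)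
      then show ?thesis using ee cs_r cs_k sg1 sg2 False jin bk br by simp
    qed
  qed
  then show ?thesis using l by (meson dvd_trans le_imp_power_dvd)
qed


lemma card_small_subsets:
  "card {S. S \<subseteq> {1..n::nat} \<and> card S \<le> d} = (\<Sum>i = 0..d. n choose i)"
proof -
  have eq: "{S. S \<subseteq> {1..n::nat} \<and> card S \<le> d} = (\<Union>i\<in>{0..d}. {S. S \<subseteq> {1..n} \<and> card S = i})"
    by auto
  have "card (\<Union>i\<in>{0..d}. {S. S \<subseteq> {1..n::nat} \<and> card S = i}) =
      (\<Sum>i = 0..d. card {S. S \<subseteq> {1..n::nat} \<and> card S = i})"
    by (rule card_UN_disjoint) (auto intro: finite_subset[of _ "Pow {1..n}"])
  also have "\<dots> = (\<Sum>i = 0..d. n choose i)"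
    by (rule sum.cong) (simp_all add: n_subsets)
  finally show ?thesis unfolding eq .
qed

theorem mainTheorem16:
  fixes p q n s :: nat and L :: "nat set" and F :: "nat set set"
  assumes "prime p" and "q = p ^ 2"
    and "1 \<le> s" and "s \<le> q - 1"
    and "L \<subseteq> {0..<q}" and "mod_interval q s L"
    and "F \<subseteq> Pow {1..n}"
    and "modular_L_avoiding q L F" and "modular_L_intersecting q L F"
  shows "card F \<le> (\<Sum>i = 0..2 * s - 1. n choose i)"
proof -
  have p1: "p > 1" using assms(1) prime_gt_1_nat by blast
  have pr: "prime (int p)" using assms(1) by simp
  have q0: "q > 0" using p1 assms(2) by simp
  have qi: "int q = (int p)^2" using assms(2) by simp
  obtain a where La: "L = {nat ((a + int j) mod int q) | j. j < s}"
    using assms(6) unfolding mod_interval_def by blast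
  have finF: "finite F" using assms(7) by (rule finite_subset) simp
  have notL: "\<not> (int p)^2 dvd (int (card A) - a - int j)" if A: "A \<in> F" and j: "j < s" for A j
  proof
    assume "(int p)^2 dvd (int (card A) - a - int j)"
    hence "int q dvd (int (card A) - (a + int j))" unfolding qi by (simp add: algebra_simps)
    hence m: "int (card A) mod int q = (a + int j) mod int q" by (simp add: mod_eq_dvd_iff)
    define l where "l = nat ((a + int j) mod int q)"
    have lL: "l \<in> L" unfolding La l_def using j by blast
    have "int l = (a + int j) mod int q" unfolding l_def using q0 by simp
    hence "int (card A mod q) = int l" using m by (simp add: of_nat_mod)
    hence "card A mod q = l" by simp
    moreover have "l mod q = l" using lL assms(5) by auto
    ultimately have "card A mod q = l mod q" by simp
    thus False using assms(8) A lL unfolding modular_L_avoiding_def by blast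
  qed
  have inL: "\<exists>j0<s. (int p)^2 dvd (int (card (A \<inter> B)) - a - int j0)"
    if A: "A \<in> F" and B: "B \<in> F" and AB: "A \<noteq> B" for A B
  proof -
    obtain l where lL: "l \<in> L" and m: "card (A \<inter> B) mod q = l mod q"
      using assms(9) A B AB unfolding modular_L_intersecting_def by blast
    obtain j where j: "j < s" "l = nat ((a + int j) mod int q)" using lL La by blast
    have "l mod q = l" using lL assms(5) by auto
    hence "int (card (A \<inter> B) mod q) = (a + int j) mod int q" using m j q0 by simp
    hence "int (card (A \<inter> B)) mod int q = (a + int j) mod int q" by (simp add: of_nat_mod)
    hence "int q dvd (int (card (A \<inter> B)) - (a + int j))" by (simp add: mod_eq_dvd_iff)
    hence "(int p)^2 dvd (int (card (A \<inter> B)) - a - int j)" unfolding qi by (simp add: algebra_simps)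
    thus ?thesis using j by blast
  qed
  define N where "N A B = PP p a s A (int (card (A \<inter> B))) div (int p ^ ee p a s A)" for A B
  have diag: "\<not> int p dvd N A A" if AF: "A \<in> F" for A
  proof -
    obtain u where u: "PP p a s A (int (card A)) = int p ^ ee p a s A * u" "\<not> int p dvd u"
      using PP_exact[OF assms(1), of s A a] notL[OF AF] by blast
    have "N A A = u" unfolding N_def using u(1) p1 by simp
    thus ?thesis using u(2) by simp
  qed
  have off: "int p dvd N A B" if ABF: "A \<in> F" "B \<in> F" "A \<noteq> B" for A B
  proof -
    obtain j0 where j0: "j0 < s" "(int p)^2 dvd (int (card (A \<inter> B)) - a - int j0)"
      using inL[OF ABF] by blast
    obtain w where w: "PP p a s A (int (card (A \<inter> B))) = int p ^ (ee p a s A + 1) * w"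
      using PP_lower[OF assms(1) assms(3) j0] by blast
    have "N A B = int p * w" unfolding N_def using w p1 by (simp add: power_add algebra_simps)
    thus ?thesis by simp
  qed
  have ffN: "ff p a s A B = of_int (N A B)" if ABF: "A \<in> F" "B \<in> F" for A B
  proof -
    have "int p ^ ee p a s A dvd PP p a s A (int (card (A \<inter> B)))"
    proof (cases "A = B")
      case True
      obtain u where u: "PP p a s A (int (card A)) = int p ^ ee p a s A * u"
        using PP_exact[OF assms(1), of s A a] notL[OF ABF(1)] by blast
      then show ?thesis using True by simp
    next
      case False
      obtain j0 where j0: "j0 < s" "(int p)^2 dvd (int (card (A \<inter> B)) - a - int j0)"
        using inL[OF ABF False] by blast
      show ?thesis using PP_lower[OF assms(1) assms(3) j0, of A]
        by (meson dvd_trans le_add1 le_imp_power_dvd)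
    qed
    then obtain w where w: "PP p a s A (int (card (A \<inter> B))) = int p ^ ee p a s A * w" by blast
    show ?thesis unfolding ff_def N_def w using p1 by simp
  qed
  have inj: "inj_on (ff p a s) F"
  proof (rule inj_onI, rule ccontr)
    fix A B assume A: "A \<in> F" and B: "B \<in> F" and e: "ff p a s A = ff p a s B" and ne: "A \<noteq> B"
    have "ff p a s A A = ff p a s B A" using e by simp
    hence "N A A = N B A" using ffN A B by simp
    thus False using diag[OF A] off[OF B A] ne by simp
  qed
  have indep: "fv.independent (ff p a s ` F)"
    unfolding fv.independent_explicit_module
  proof (intro allI impI)
    fix t u v
    assume ft: "finite t" and tF: "t \<subseteq> ff p a s ` F" and sum0: "(\<Sum>v\<in>t. sc (u v) v) = 0" and vt: "v \<in> t"
    define T where "T = {A\<in>F. ff p a s A \<in> t}"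
    have tT: "t = ff p a s ` T" using tF unfolding T_def by auto
    have injT: "inj_on (ff p a s) T" using inj unfolding T_def by (rule inj_on_subset) auto
    have TF: "T \<subseteq> F" unfolding T_def by auto
    have finT: "finite T" using finF TF by (rule finite_subset[rotated])
    define c where "c A = u (ff p a s A)" for A
    have sumT: "(\<Sum>A\<in>T. sc (c A) (ff p a s A)) = 0"
      using sum0 unfolding tT sum.reindex[OF injT] c_def by simp
    have eqB: "(\<Sum>A\<in>T. c A * of_int (N A B)) = 0" if "B \<in> T" for B
    proof -
      have "(\<Sum>A\<in>T. sc (c A) (ff p a s A)) B = 0" using sumT by simp
      hence "(\<Sum>A\<in>T. c A * ff p a s A B) = 0" by (simp add: sum_fun_apply' sc_def)
      moreover have "(\<Sum>A\<in>T. c A * ff p a s A B) = (\<Sum>A\<in>T. c A * of_int (N A B))"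
        using that TF ffN by (intro sum.cong) auto
      ultimately show ?thesis by simp
    qed
    obtain d where d: "d \<noteq> 0" "\<forall>A\<in>T. \<exists>z. of_int d * c A = of_int z"
      using common_denom[OF finT, of c] by blast
    define m where "m A = (SOME z. of_int d * c A = of_int z)" for A
    have m: "of_int d * c A = of_int (m A)" if "A \<in> T" for A
    proof -
      have "\<exists>z. of_int d * c A = of_int z" using d(2) that by blast
      thus ?thesis unfolding m_def by (rule someI_ex)
    qed
    have eqm: "(\<Sum>A\<in>T. m A * N A B) = 0" if "B \<in> T" for B
    proof -
      have "(of_int (\<Sum>A\<in>T. m A * N A B) :: rat) = (\<Sum>A\<in>T. of_int d * c A * of_int (N A B))"
        by (simp add: m)
      also have "\<dots> = of_int d * (\<Sum>A\<in>T. c A * of_int (N A B))"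
        by (simp add: sum_distrib_left mult.assoc)
      also have "\<dots> = 0" using eqB[OF that] by simp
      finally have "(of_int (\<Sum>A\<in>T. m A * N A B) :: rat) = 0" .
      thus ?thesis by (simp only: of_int_eq_0_iff)
    qed
    have m0: "\<forall>A\<in>T. m A = 0"
      by (rule descent[OF pr finT, of N]) (use off diag TF eqm in auto)
    obtain A where A: "A \<in> T" "v = ff p a s A" using vt tT by blast
    have "of_int d * c A = 0" using m[OF A(1)] m0 A(1) by simp
    hence "c A = 0" using d(1) by simp
    thus "u v = 0" using A unfolding c_def by simp
  qed
  define W where "W = chi ` {S. S \<subseteq> {1..n} \<and> card S \<le> 2 * s - 1}"
  have finW: "finite W" unfolding W_def by (rule finite_imageI) (auto intro: finite_subset[of _ "Pow {1..n}"])
  have spanW: "ff p a s ` F \<subseteq> fv.span W"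
  proof
    fix x assume "x \<in> ff p a s ` F"
    then obtain A where A: "A \<in> F" "x = ff p a s A" by blast
    have Asub: "A \<subseteq> {1..n}" using A assms(7) by auto
    hence finA: "finite A" by (rule finite_subset) simp
    have "x \<in> VV A (2 * s - 1)" using ff_span[OF finA assms(3)] A by simp
    moreover have "VV A (2 * s - 1) \<subseteq> fv.span W"
      unfolding VV_def W_def using Asub by (intro fv.span_mono image_mono) auto
    ultimately show "x \<in> fv.span W" by blast
  qed
  have "card (ff p a s ` F) \<le> card W"
    using fv.independent_span_bound[OF finW indep spanW] by simp
  also have "\<dots> \<le> card {S. S \<subseteq> {1..n} \<and> card S \<le> 2 * s - 1}"
    unfolding W_def by (rule card_image_le) (auto intro: finite_subset[of _ "Pow {1..n}"])
  also have "\<dots> = (\<Sum>i = 0..2 * s - 1. n choose i)" by (rule card_small_subsets)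
  finally show ?thesis using card_image[OF inj] by simp
qed

end
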